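(* The matrix $Z=(\alpha(i,j))_{i,j\in\mathbf N}$ has the following properties: (a) $\alpha(i,j)=\delta_{i,j}$ if $i$ is odd. (b) If $i=d2^k$ with $d$ odd and $k\ge1$, then $\alpha(i,j)=\alpha_k(j/d)$ if $d\mid j$, and $\alpha(i,j)=0$ otherwise. (c) $\alpha(im,jm)=\alpha(i,j)$ whenever $m$ is odd. (d) $Z$ is upper unitriangular. (e) $ZDZ^{-1}=J$. (f) $Z\in\mathcal{DR}_0$. Moreover, $Z$ is the unique matrix (indexed by $\mathbf N\times\mathbf N$) satisfying (a) and (e).
   Context: $\mathbf N=\{1,2,\dots\}$. For $k,m\in\mathbf N$, $\alpha_k(m)$ is the number of $k$-tuples of integers $\ge2$ with product $m$. The divisor matrix $D=(d_{i,j})$ has $d_{i,j}=1$ if $i\mid j$ and $0$ otherwise. $J=(J_{i,j})$ has $J_{i,j}=1$ if $j\in\{i,2i\}$ and $0$ otherwise. $Z$ is defined as follows: its odd-indexed rows have a single nonzero entry, equal to $1$, on the diagonal; for $i=2^kd$ with $d$ odd and $k\ge1$, the $i$-th row of $Z$ equals the $d$-th row of $(D-I)^k$. $\mathcal{DR}_0$ is the set of $\mathbf N\times\mathbf N$ complex matrices $A=(a_{i,j})$ with finitely many nonzero entries in each column for which there exist positive constants $C,c$ with $a_{i,j}=0$ whenever $i>Cj^c$ and $|a_{i,j}|\le Cj^c$ for all $i,j$. *)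

theory Defs
  imports "HOL-Analysis.Analysis"
begin

text \<open>N x N matrices are modelled as functions nat => nat => complex; only the
  entries with positive indices i, j >= 1 are meaningful (index 0 is ignored).\<close>

type_synonym cmat = "nat \<Rightarrow> nat \<Rightarrow> complex"

definition col_finite :: "cmat \<Rightarrow> bool" where
  "col_finite A \<longleftrightarrow> (\<forall>j\<ge>1. finite {i. 1 \<le> i \<and> A i j \<noteq> 0})"

text \<open>Matrix product; well defined (a finite sum) whenever B is column-finite.\<close>
definition mmult :: "cmat \<Rightarrow> cmat \<Rightarrow> cmat" (infixl "**\<^sub>M" 70) where
  "mmult A B = (\<lambda>i j. \<Sum>k\<in>{k. 1 \<le> k \<and> B k j \<noteq> 0}. A i k * B k j)"

definition idm :: cmat where
  "idm = (\<lambda>i j. if 1 \<le> i \<and> i = j then 1 else 0)"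

fun mpow :: "cmat \<Rightarrow> nat \<Rightarrow> cmat" where
  "mpow A 0 = idm"
| "mpow A (Suc n) = mmult (mpow A n) A"

definition Dm :: cmat where
  "Dm = (\<lambda>i j. if 1 \<le> i \<and> 1 \<le> j \<and> i dvd j then 1 else 0)"

definition Jm :: cmat where
  "Jm = (\<lambda>i j. if 1 \<le> i \<and> (j = i \<or> j = 2 * i) then 1 else 0)"

definition Zm :: cmat where
  "Zm = (\<lambda>i j. if i = 0 \<or> j = 0 then 0
          else if odd i then (if i = j then 1 else 0)
          else mpow (\<lambda>a b. Dm a b - idm a b) (multiplicity 2 i) (i div 2 ^ multiplicity 2 i) j)"

definition alpha :: "nat \<Rightarrow> nat \<Rightarrow> nat" where
  "alpha k m = card {xs :: nat list. length xs = k \<and> (\<forall>x\<in>set xs. 2 \<le> x) \<and> prod_list xs = m}"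

definition DR0 :: "cmat set" where
  "DR0 = {A. col_finite A \<and>
     (\<exists>C c :: real. C > 0 \<and> c > 0 \<and>
        (\<forall>i\<ge>1. \<forall>j\<ge>1. (real i > C * real j powr c \<longrightarrow> A i j = 0)
                        \<and> norm (A i j) \<le> C * real j powr c))}"

definition meq :: "cmat \<Rightarrow> cmat \<Rightarrow> bool" where
  "meq A B \<longleftrightarrow> (\<forall>i\<ge>1. \<forall>j\<ge>1. A i j = B i j)"

definition conj_to_J :: "cmat \<Rightarrow> bool" where
  "conj_to_J A \<longleftrightarrow> (\<exists>W. col_finite W \<and> meq (A **\<^sub>M W) idm \<and> meq (W **\<^sub>M A) idm
                      \<and> meq ((A **\<^sub>M Dm) **\<^sub>M W) Jm)"

end

theory Submission
  imports Defs
begin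

lemma mmult_superset:
  assumes "finite S" "{k. 1 \<le> k \<and> B k j \<noteq> 0} \<subseteq> S" "S \<subseteq> {k. 1 \<le> k}"
  shows "mmult A B i j = (\<Sum>k\<in>S. A i k * B k j)"
  unfolding mmult_def
  by (rule sum.mono_neutral_left) (use assms in auto)

lemma mmult_tri:
  assumes "\<And>k. k > j \<Longrightarrow> B k j = 0"
  shows "mmult A B i j = (\<Sum>k\<in>{1..j}. A i k * B k j)"
  by (rule mmult_superset) (use assms in \<open>auto, meson not_le\<close>)

lemma col_finiteD: "col_finite A \<Longrightarrow> j \<ge> 1 \<Longrightarrow> finite {i. 1 \<le> i \<and> A i j \<noteq> 0}"
  by (simp add: col_finite_def)

lemma col_finite_tri: "(\<And>i j. 1 \<le> j \<Longrightarrow> i > j \<Longrightarrow> A i j = 0) \<Longrightarrow> col_finite A"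
  unfolding col_finite_def
  by (auto intro: finite_subset[of _ "{..j}" for j] simp: not_le[symmetric])

lemma mmult_idm_right: "j \<ge> 1 \<Longrightarrow> mmult A idm i j = A i j"
  by (subst mmult_superset[of "{j}"]) (auto simp: idm_def)

lemma mmult_idm_left:
  assumes "col_finite B" "i \<ge> 1" "j \<ge> 1"
  shows "mmult idm B i j = B i j"
proof -
  have "mmult idm B i j = (\<Sum>k\<in>insert i {k. 1 \<le> k \<and> B k j \<noteq> 0}. idm i k * B k j)"
    by (rule mmult_superset) (use assms col_finiteD in auto)
  also have "\<dots> = B i j"
    by (subst sum.remove[of _ i]) (use assms col_finiteD in \<open>auto simp: idm_def\<close>)
  finally show ?thesis .
qed

lemma mmult_Jm_left:
  assumes "col_finite B" "i \<ge> 1" "j \<ge> 1"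
  shows "mmult Jm B i j = B i j + B (2*i) j"
proof -
  have "mmult Jm B i j = (\<Sum>k\<in>insert i (insert (2*i) {k. 1 \<le> k \<and> B k j \<noteq> 0}). Jm i k * B k j)"
    by (rule mmult_superset) (use assms col_finiteD in auto)
  also have "\<dots> = B i j + B (2*i) j"
  proof -
    have f: "finite (insert i (insert (2*i) {k. 1 \<le> k \<and> B k j \<noteq> 0}))"
      using assms col_finiteD by auto
    have "(\<Sum>k\<in>insert i (insert (2*i) {k. 1 \<le> k \<and> B k j \<noteq> 0}). Jm i k * B k j)
        = (\<Sum>k\<in>{i, 2*i}. Jm i k * B k j)"
      by (rule sum.mono_neutral_right) (use f assms in \<open>auto simp: Jm_def\<close>)
    also have "\<dots> = B i j + B (2*i) j" using assms by (simp add: Jm_def)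
    finally show ?thesis .
  qed
  finally show ?thesis .
qed

lemma meq_cong_right: "meq B B' \<Longrightarrow> j \<ge> 1 \<Longrightarrow> mmult A B i j = mmult A B' i j"
  unfolding mmult_def meq_def by (auto intro!: sum.cong)

lemma meq_cong_left: "meq A A' \<Longrightarrow> i \<ge> 1 \<Longrightarrow> mmult A B i j = mmult A' B i j"
  unfolding mmult_def meq_def by (auto intro!: sum.cong)

lemma mmult_assoc:
  assumes B: "col_finite B" and C: "col_finite C" and j: "j \<ge> 1"
  shows "mmult (mmult A B) C i j = mmult A (mmult B C) i j"
proof -
  define T where "T = {k. 1 \<le> k \<and> C k j \<noteq> 0}"
  define U where "U = (\<Union>k\<in>T. {l. 1 \<le> l \<and> B l k \<noteq> 0})"
  have fT: "finite T" using col_finiteD[OF C j] T_def by simp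
  have fU: "finite U" unfolding U_def using fT col_finiteD[OF B] T_def by auto
  have "mmult (mmult A B) C i j = (\<Sum>k\<in>T. mmult A B i k * C k j)"
    unfolding T_def mmult_def[of _ C] ..
  also have "\<dots> = (\<Sum>k\<in>T. (\<Sum>l\<in>U. A i l * B l k) * C k j)"
    by (rule sum.cong[OF refl], subst mmult_superset[of U])
       (use fU in \<open>auto simp: U_def\<close>)
  also have "\<dots> = (\<Sum>l\<in>U. A i l * (\<Sum>k\<in>T. B l k * C k j))"
    by (simp add: sum_distrib_left sum_distrib_right mult.assoc sum.swap[of _ T])
  also have "\<dots> = (\<Sum>l\<in>U. A i l * mmult B C l j)"
    by (rule sum.cong[OF refl], subst mmult_superset[of T]) (use fT in \<open>auto simp: T_def\<close>)
  also have "\<dots> = mmult A (mmult B C) i j"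
  proof (rule mmult_superset[symmetric])
    show "finite U" by fact
    show "U \<subseteq> {k. 1 \<le> k}" by (auto simp: U_def)
    show "{k. 1 \<le> k \<and> mmult B C k j \<noteq> 0} \<subseteq> U"
    proof clarify
      fix l assume l: "1 \<le> l" "mmult B C l j \<noteq> 0"
      then have "(\<Sum>k\<in>T. B l k * C k j) \<noteq> 0" by (simp add: mmult_def T_def)
      then obtain k where "k \<in> T" "B l k * C k j \<noteq> 0" by (rule sum.not_neutral_contains_not_neutral)
      then have "k \<in> T" "B l k \<noteq> 0" by auto
      then show "l \<in> U" using l by (auto simp: U_def)
    qed
  qed
  finally show ?thesis .
qed


function rinv :: "cmat \<Rightarrow> nat \<Rightarrow> nat \<Rightarrow> complex" where
  "rinv U i j = (if i = 0 \<or> j = 0 \<or> j < i then 0 else if i = j then 1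
      else - (\<Sum>k\<in>{i<..j}. U i k * rinv U k j))"
  by auto
termination by (relation "Wellfounded.measure (\<lambda>(U,i,j). j - i)") auto

declare rinv.simps[simp del]

definition unitri :: "cmat \<Rightarrow> bool" where
  "unitri U \<longleftrightarrow> (\<forall>i j. 1 \<le> j \<longrightarrow> j < i \<longrightarrow> U i j = 0) \<and> (\<forall>i\<ge>1. U i i = 1)"

lemma unitri_rinv: "unitri (rinv U)"
  unfolding unitri_def by (auto simp: rinv.simps)

lemma unitri_col_finite: "unitri U \<Longrightarrow> col_finite U"
  by (rule col_finite_tri) (auto simp: unitri_def)

lemma rinv_right:
  assumes U: "unitri U"
  shows "meq (mmult U (rinv U)) idm"
  unfolding meq_def
proof (intro allI impI)
  fix i j :: nat assume i: "i \<ge> 1" and j: "j \<ge> 1"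
  have "mmult U (rinv U) i j = (\<Sum>k\<in>{1..j}. U i k * rinv U k j)"
    by (rule mmult_tri) (auto simp: rinv.simps)
  also have "\<dots> = idm i j"
  proof (cases "j < i")
    case True
    then show ?thesis using U by (auto simp: unitri_def idm_def intro!: sum.neutral)
  next
    case False
    then have ij: "i \<le> j" by simp
    have split: "{1..j} = {1..<i} \<union> {i} \<union> {i<..j}" using i ij by auto
    have "(\<Sum>k\<in>{1..j}. U i k * rinv U k j) =
       (\<Sum>k\<in>{1..<i}. U i k * rinv U k j) + U i i * rinv U i j + (\<Sum>k\<in>{i<..j}. U i k * rinv U k j)"
      unfolding split by (subst sum.union_disjoint; auto)+
    also have "(\<Sum>k\<in>{1..<i}. U i k * rinv U k j) = 0"
      using U by (auto simp: unitri_def intro!: sum.neutral)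
    also have "U i i = 1" using U i by (simp add: unitri_def)
    finally have e: "(\<Sum>k\<in>{1..j}. U i k * rinv U k j) = rinv U i j + (\<Sum>k\<in>{i<..j}. U i k * rinv U k j)"
      by simp
    show ?thesis
    proof (cases "i = j")
      case True then show ?thesis using e i by (simp add: rinv.simps idm_def)
    next
      case False
      then have "rinv U i j = - (\<Sum>k\<in>{i<..j}. U i k * rinv U k j)"
        using i ij by (subst rinv.simps) simp
      then show ?thesis using e False by (simp add: idm_def)
    qed
  qed
  finally show "mmult U (rinv U) i j = idm i j" .
qed

lemma unitri_inverse:
  assumes U: "unitri U"
  shows "\<exists>W. col_finite W \<and> meq (mmult U W) idm \<and> meq (mmult W U) idm"
proof (intro exI conjI)
  define W where "W = rinv U"
  define W2 where "W2 = rinv W"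
  have UW: "meq (mmult U W) idm" using rinv_right[OF U] W_def by simp
  have WW2: "meq (mmult W W2) idm" using rinv_right[OF unitri_rinv] W_def W2_def by simp
  have cW: "col_finite W" "col_finite W2" "col_finite U"
    using unitri_col_finite[OF unitri_rinv] unitri_col_finite[OF U] W_def W2_def by auto
  have UW2: "U i j = W2 i j" if "i \<ge> 1" "j \<ge> 1" for i j
  proof -
    have "U i j = mmult U idm i j" using that by (simp add: mmult_idm_right)
    also have "\<dots> = mmult U (mmult W W2) i j" using meq_cong_right[OF WW2 that(2)] by simp
    also have "\<dots> = mmult (mmult U W) W2 i j" using mmult_assoc[OF cW(1,2) that(2)] by simp
    also have "\<dots> = mmult idm W2 i j" using meq_cong_left[OF UW that(1)] by simp
    also have "\<dots> = W2 i j" using mmult_idm_left[OF cW(2) that] .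
    finally show ?thesis .
  qed
  then have "meq U W2" by (simp add: meq_def)
  show "col_finite W" by fact
  show "meq (mmult U W) idm" by fact
  show "meq (mmult W U) idm"
    unfolding meq_def using meq_cong_right[OF \<open>meq U W2\<close>] WW2 by (simp add: meq_def)
qed


definition Mm :: cmat where "Mm = (\<lambda>a b. Dm a b - idm a b)"

lemma Mm_val: "Mm b j = (if 1 \<le> b \<and> 1 \<le> j \<and> b dvd j \<and> b \<noteq> j then 1 else 0)"
  by (auto simp: Mm_def Dm_def idm_def)

lemma Mm_supp: "{b. 1 \<le> b \<and> Mm b j \<noteq> 0} = {b. 1 \<le> b \<and> 1 \<le> j \<and> b dvd j \<and> b \<noteq> j}"
  by (auto simp: Mm_val)

lemma mpow_Suc_Mm: "mpow Mm (Suc k) d j = (\<Sum>b\<in>{b. 1 \<le> b \<and> 1 \<le> j \<and> b dvd j \<and> b \<noteq> j}. mpow Mm k d b)"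
  by (simp add: mmult_def Mm_supp) (auto simp: Mm_val intro!: sum.cong)

lemma mpow_Mm_0: "mpow Mm k d 0 = 0"
  by (cases k) (simp add: idm_def, simp only: mpow_Suc_Mm, simp)

lemma mult_odd:
  assumes "odd d" shows "multiplicity (2::nat) (d * 2^k) = k"
proof (induction k)
  case 0 then show ?case using assms by (simp add: not_dvd_imp_multiplicity_0)
next
  case (Suc k)
  have "d * 2^k \<noteq> 0" using odd_pos[OF assms] by auto
  then have "multiplicity (2::nat) (2 * (d * 2^k)) = Suc (multiplicity 2 (d * 2^k))"
    using assms by (intro multiplicity_times_same) (auto intro: odd_pos)
  then show ?case using Suc by (simp add: mult_ac)
qed

lemma decomp:
  assumes "(i::nat) \<ge> 1"
  shows "i = (i div 2 ^ multiplicity 2 i) * 2 ^ multiplicity 2 i" "odd (i div 2 ^ multiplicity 2 i)"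
  using multiplicity_dvd[of "2::nat" i] multiplicity_decompose[of i "2::nat"] assms by auto

lemma Zrow:
  assumes "i \<ge> 1"
  shows "Zm i j = mpow Mm (multiplicity 2 i) (i div 2 ^ multiplicity 2 i) j"
proof (cases "j = 0")
  case True then show ?thesis by (simp add: Zm_def mpow_Mm_0)
next
  case False
  show ?thesis
  proof (cases "odd i")
    case True
    then have "multiplicity (2::nat) i = 0" by (simp add: not_dvd_imp_multiplicity_0)
    then show ?thesis using True assms False by (simp add: Zm_def idm_def)
  next
    case ev: False
    then show ?thesis using assms False by (simp add: Zm_def Mm_def[symmetric])
  qed
qed

lemma Zrow':
  assumes "odd d" shows "Zm (d * 2^k) j = mpow Mm k d j"
proof -
  have d: "d \<ge> 1" using assms by (cases d) auto
  show ?thesis using Zrow[of "d * 2^k" j] d by (simp add: mult_odd[OF assms])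
qed

lemma Z_double:
  assumes "i \<ge> 1" shows "Zm (2 * i) j = mmult Zm Mm i j"
proof -
  define k where "k = multiplicity 2 i"
  define d where "d = i div 2^k"
  have i: "i = d * 2^k" and d: "odd d" using decomp[OF assms] k_def d_def by auto
  have "Zm (2 * i) j = mpow Mm (Suc k) d j"
    using Zrow'[OF d, of "Suc k"] i by (simp add: mult_ac)
  also have "\<dots> = mmult Zm Mm i j"
    unfolding mpow.simps mmult_def using Zrow'[OF d] i by (auto intro!: sum.cong)
  finally show ?thesis .
qed


fun aa :: "nat \<Rightarrow> nat \<Rightarrow> nat" where
  "aa 0 m = (if m = 1 then 1 else 0)"
| "aa (Suc k) m = (\<Sum>c\<in>{c. c dvd m \<and> c < m}. aa k c)"

lemma finite_pd: "finite {c::nat. c dvd m \<and> c < m}"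
  by (rule finite_subset[of _ "{..<m}"]) auto

lemma mpow_aa:
  assumes "d \<ge> 1" "j \<ge> 1"
  shows "mpow Mm k d j = of_nat (if d dvd j then aa k (j div d) else 0)"
  using assms(2)
proof (induction k arbitrary: j)
  case 0
  then show ?case using assms(1) by (auto simp: idm_def elim!: dvdE)
next
  case (Suc k)
  define S where "S = {b. 1 \<le> b \<and> 1 \<le> j \<and> b dvd j \<and> b \<noteq> j}"
  have fS: "finite S" by (rule finite_subset[of _ "{..j}"]) (auto simp: S_def dest: dvd_imp_le)
  have "mpow Mm (Suc k) d j = (\<Sum>b\<in>S. mpow Mm k d b)" unfolding S_def by (rule mpow_Suc_Mm)
  also have "\<dots> = (\<Sum>b\<in>S. of_nat (if d dvd b then aa k (b div d) else 0))"
    by (rule sum.cong) (auto simp: S_def Suc.IH)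
  also have "\<dots> = of_nat (\<Sum>b\<in>S. (if d dvd b then aa k (b div d) else 0))"
    by simp
  also have "(\<Sum>b\<in>S. (if d dvd b then aa k (b div d) else 0)) = (if d dvd j then aa (Suc k) (j div d) else 0)"
  proof (cases "d dvd j")
    case False
    then show ?thesis by (auto simp: S_def intro!: sum.neutral dest: dvd_trans)
  next
    case True
    then obtain m where jm: "j = d * m" by (auto elim: dvdE)
    have d0: "d > 0" using assms by simp
    have "(\<Sum>b\<in>S. (if d dvd b then aa k (b div d) else 0)) = (\<Sum>b\<in>{b\<in>S. d dvd b}. aa k (b div d))"
      by (rule sum.inter_filter[OF fS, symmetric])
    also have "{b\<in>S. d dvd b} = (\<lambda>c. d * c) ` {c. c dvd m \<and> c < m}"
    proof (intro equalityI subsetI)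
      fix b assume "b \<in> {b\<in>S. d dvd b}"
      then obtain c where b: "b = d * c" "1 \<le> b" "b dvd j" "b \<noteq> j" by (auto simp: S_def elim: dvdE)
      then have "c dvd m" "c \<noteq> m" using jm d0 by auto
      moreover have "m > 0" using jm Suc.prems by (cases m) auto
      ultimately have "c < m" using dvd_imp_le[of c m] by auto
      then show "b \<in> (\<lambda>c. d * c) ` {c. c dvd m \<and> c < m}" using b \<open>c dvd m\<close> by auto
    next
      fix b assume "b \<in> (\<lambda>c. d * c) ` {c. c dvd m \<and> c < m}"
      then obtain c where c: "b = d * c" "c dvd m" "c < m" by auto
      have "m > 0" using jm Suc.prems by (cases m) auto
      then have "c > 0" using c by (cases c) auto
      then show "b \<in> {b\<in>S. d dvd b}" using c jm d0 Suc.prems by (auto simp: S_def)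
    qed
    also have "(\<Sum>b\<in>(\<lambda>c. d * c) ` {c. c dvd m \<and> c < m}. aa k (b div d)) = (\<Sum>c\<in>{c. c dvd m \<and> c < m}. aa k c)"
      by (subst sum.reindex) (use d0 in \<open>auto simp: inj_on_def\<close>)
    finally show ?thesis using True jm d0 by simp
  qed
  finally show ?case .
qed

definition LL :: "nat \<Rightarrow> nat \<Rightarrow> nat list set" where
  "LL k m = {xs :: nat list. length xs = k \<and> (\<forall>x\<in>set xs. 2 \<le> x) \<and> prod_list xs = m}"

lemma prod_list_ge: "\<forall>x\<in>set xs. 2 \<le> (x::nat) \<Longrightarrow> 2 ^ length xs \<le> prod_list xs"
  by (induction xs) (auto intro: mult_le_mono)

lemma finite_LL: "finite (LL k m)"
proof (cases "m = 0")
  case True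
  have "LL k 0 = {}" using prod_list_ge by (force simp: LL_def)
  then show ?thesis using True by simp
next
  case False
  show ?thesis
  proof (rule finite_subset[OF _ finite_lists_length_eq[OF finite_atMost[of m], of k]])
    show "LL k m \<subseteq> {xs. set xs \<subseteq> {..m} \<and> length xs = k}"
      using False by (auto simp: LL_def dest!: prod_list_dvd intro: dvd_imp_le)
  qed
qed

lemma card_LL: "card (LL k m) = aa k m"
proof (induction k arbitrary: m)
  case 0
  have "LL 0 m = (if m = 1 then {[]} else {})" by (auto simp: LL_def)
  then show ?case by simp
next
  case (Suc k)
  define P where "P = {c. c dvd m \<and> c < m}"
  define g where "g = (\<lambda>(c::nat, ys::nat list). (m div c) # ys)"
  have img: "LL (Suc k) m = g ` (SIGMA c:P. LL k c)"
  proof (intro equalityI subsetI)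
    fix xs assume xs: "xs \<in> LL (Suc k) m"
    then obtain x ys where xy: "xs = x # ys" by (cases xs) (auto simp: LL_def)
    have x2: "x \<ge> 2" and ys: "ys \<in> LL k (prod_list ys)" and m: "m = x * prod_list ys"
      using xs xy by (auto simp: LL_def)
    have "prod_list ys \<ge> 1" using prod_list_ge[of ys] ys by (auto simp: LL_def intro: order_trans[rotated])
    then have "prod_list ys < m" "prod_list ys dvd m" "m div prod_list ys = x"
      using m x2 by auto
    then show "xs \<in> g ` (SIGMA c:P. LL k c)"
      using ys xy by (auto simp: P_def g_def intro!: image_eqI[of _ _ "(prod_list ys, ys)"])
  next
    fix xs assume "xs \<in> g ` (SIGMA c:P. LL k c)"
    then obtain c ys where c: "c dvd m" "c < m" and ys: "ys \<in> LL k c" and xs: "xs = (m div c) # ys"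
      by (auto simp: P_def g_def)
    have "c > 0" using c by (cases c) auto
    then have "m div c \<ge> 2" using c by (auto elim!: dvdE)
    then show "xs \<in> LL (Suc k) m" using ys xs c by (auto simp: LL_def)
  qed
  have inj: "inj_on g (SIGMA c:P. LL k c)"
    by (auto simp: inj_on_def g_def LL_def)
  have "card (LL (Suc k) m) = card (SIGMA c:P. LL k c)"
    unfolding img by (rule card_image[OF inj])
  also have "\<dots> = (\<Sum>c\<in>P. card (LL k c))"
    using finite_pd finite_LL P_def by simp
  also have "\<dots> = aa (Suc k) m" using Suc.IH P_def by simp
  finally show ?case .
qed

lemma alpha_aa: "alpha k m = aa k m"
  using card_LL by (simp add: alpha_def LL_def)


lemma pd_le_half:
  assumes "c dvd (m::nat)" "c < m" shows "2 * c \<le> m"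
proof -
  obtain q where q: "m = c * q" using assms(1) by (auto elim: dvdE)
  then have "q \<noteq> 0" "q \<noteq> 1" using assms(2) by auto
  then have "q \<ge> 2" by auto
  then have "c * 2 \<le> c * q" by (rule mult_le_mono2)
  then show ?thesis using q by simp
qed

lemma div_div_pd: assumes "c dvd (m::nat)" "m > 0" shows "m div (m div c) = c"
proof -
  obtain q where q: "m = c * q" using assms(1) by (auto elim: dvdE)
  then have "c > 0" "q > 0" using assms by auto
  then show ?thesis using q by simp
qed

lemma aa_small: "m \<ge> 1 \<Longrightarrow> m < 2 ^ k \<Longrightarrow> aa k m = 0"
proof (induction k arbitrary: m)
  case 0 then show ?case by simp
next
  case (Suc k)
  have "aa k c = 0" if "c dvd m" "c < m" for c
  proof (rule Suc.IH)
    show "c \<ge> 1" using that Suc.prems by (cases c) auto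
    show "c < 2 ^ k" using pd_le_half[OF that] Suc.prems by simp
  qed
  then show ?case by simp
qed

lemma aa_diag: "aa k (2 ^ k) = 1"
proof (induction k)
  case 0 then show ?case by simp
next
  case (Suc k)
  have mem: "(2::nat) ^ k \<in> {c. c dvd 2 ^ Suc k \<and> c < 2 ^ Suc k}" by auto
  have "aa (Suc k) (2 ^ Suc k) = aa k (2^k) + (\<Sum>c\<in>{c. c dvd 2 ^ Suc k \<and> c < 2 ^ Suc k} - {2^k}. aa k c)"
    by (simp only: aa.simps, subst sum.remove[OF finite_pd mem]) simp
  also have "(\<Sum>c\<in>{c. c dvd 2 ^ Suc k \<and> c < 2 ^ Suc k} - {2^k}. aa k c) = 0"
  proof (rule sum.neutral, rule ballI)
    fix c :: nat assume "c \<in> {c. c dvd 2 ^ Suc k \<and> c < 2 ^ Suc k} - {2^k}"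
    then have c: "c dvd 2 ^ Suc k" "c < 2 ^ Suc k" "c \<noteq> 2 ^ k" by auto
    have "2 * c \<le> 2 ^ Suc k" by (rule pd_le_half[OF c(1,2)])
    then have "c < 2 ^ k" using c(3) by simp
    moreover have "c \<ge> 1" using c by (cases c) auto
    ultimately show "aa k c = 0" by (rule aa_small[rotated])
  qed
  finally show ?case using Suc by simp
qed

lemma telescope: "n \<ge> 1 \<Longrightarrow> (\<Sum>e\<in>{2..n}. 1 / (real e * (real e - 1))) = 1 - 1 / real n"
proof (induction n rule: dec_induct)
  case base then show ?case by simp
next
  case (step n)
  have "{2..Suc n} = insert (Suc n) {2..n}" using step(1) by auto
  then have "(\<Sum>e\<in>{2..Suc n}. 1 / (real e * (real e - 1))) = 1 / (real (Suc n) * real n) + (1 - 1 / real n)"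
    using step by simp
  also have "\<dots> = 1 - 1 / real (Suc n)"
  proof -
    have "real n > 0" using step(1) by simp
    then have "real n + real n * real n > 0" by (simp add: add_pos_pos)
    then show ?thesis using \<open>real n > 0\<close> by (simp add: field_simps)
  qed
  finally show ?case .
qed

lemma pd_sq_sum: "m \<ge> 1 \<Longrightarrow> (\<Sum>c\<in>{c. c dvd m \<and> c < m}. c^2) \<le> (m::nat)^2"
proof -
  assume m: "m \<ge> 1"
  define P where "P = {c. c dvd m \<and> c < m}"
  define g where "g = (\<lambda>c. m div c)"
  have inj: "inj_on g P" unfolding inj_on_def g_def P_def
    using div_div_pd m by (metis less_le_trans zero_less_one mem_Collect_eq)
  have sub: "g ` P \<subseteq> {2..m}"
  proof clarify
    fix c assume c: "c \<in> P"
    then have "c > 0" using m by (cases c) (auto simp: P_def)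
    then show "g c \<in> {2..m}" using c pd_le_half[of c m] by (auto simp: P_def g_def elim!: dvdE)
  qed
  have "real (\<Sum>c\<in>P. c^2) = (\<Sum>c\<in>P. (real m / real (g c))^2)"
  proof -
    have "real (c^2) = (real m / real (g c))^2" if "c \<in> P" for c
    proof -
      have "c > 0" using m that by (cases c) (auto simp: P_def)
      have "c dvd m" using that by (simp add: P_def)
      then obtain q where q: "m = c * q" by (auto elim: dvdE)
      then have "q > 0" using m by (cases q) auto
      with q have "m = c * q" "q > 0" by auto
      then show ?thesis by (simp add: g_def)
    qed
    then show ?thesis by simp
  qed
  also have "\<dots> = (\<Sum>e\<in>g ` P. (real m / real e)^2)"
    by (subst sum.reindex[OF inj]) simp
  also have "\<dots> \<le> (\<Sum>e\<in>{2..m}. (real m / real e)^2)"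
    by (rule sum_mono2[OF _ sub]) auto
  also have "\<dots> \<le> (\<Sum>e\<in>{2..m}. real m ^ 2 * (1 / (real e * (real e - 1))))"
  proof (rule sum_mono)
    fix e assume e: "e \<in> {2..m}"
    then have "real e * (real e - 1) \<le> real e ^ 2" "real e * (real e - 1) > 0" by (auto simp: power2_eq_square)
    then show "(real m / real e)^2 \<le> real m ^ 2 * (1 / (real e * (real e - 1)))"
      by (simp add: power_divide divide_simps mult_left_mono)
  qed
  also have "\<dots> = real m ^ 2 * (1 - 1 / real m)" unfolding sum_distrib_left[symmetric] telescope[OF m] ..
  also have "\<dots> \<le> real m ^ 2" using m by (simp add: mult_left_le)
  finally have "real (\<Sum>c\<in>P. c^2) \<le> real (m^2)" by simp
  then show ?thesis unfolding P_def by (simp only: of_nat_le_iff)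
qed

lemma aa_bound: "m \<ge> 1 \<Longrightarrow> aa k m \<le> m ^ 2"
proof (induction k arbitrary: m)
  case 0 then show ?case by simp
next
  case (Suc k)
  have "aa (Suc k) m \<le> (\<Sum>c\<in>{c. c dvd m \<and> c < m}. c^2)"
    unfolding aa.simps
  proof (rule sum_mono)
    fix c assume "c \<in> {c. c dvd m \<and> c < m}"
    then have "c \<ge> 1" using Suc.prems by (cases c) auto
    then show "aa k c \<le> c^2" by (rule Suc.IH)
  qed
  also have "\<dots> \<le> m^2" by (rule pd_sq_sum[OF Suc.prems])
  finally show ?case .
qed


lemma Z_aa:
  assumes "odd d" "j \<ge> 1"
  shows "Zm (d * 2^k) j = of_nat (if d dvd j then aa k (j div d) else 0)"
proof -
  have "d \<ge> 1" using odd_pos[OF assms(1)] by simp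
  then show ?thesis using Zrow'[OF assms(1)] mpow_aa[OF _ assms(2)] by simp
qed

lemma partb:
  assumes "odd d" "j \<ge> 1"
  shows "Zm (d * 2 ^ k) j = (if d dvd j then of_nat (alpha k (j div d)) else 0)"
  using Z_aa[OF assms] by (simp add: alpha_aa)

lemma partc:
  assumes i: "i \<ge> 1" and j: "j \<ge> 1" and m: "odd m"
  shows "Zm (i * m) (j * m) = Zm i j"
proof -
  define k where "k = multiplicity 2 i"
  define d where "d = i div 2^k"
  have id: "i = d * 2^k" and d: "odd d" using decomp[OF i] k_def d_def by auto
  have m0: "m > 0" using odd_pos[OF m] .
  have "Zm (i * m) (j * m) = Zm ((d * m) * 2^k) (j * m)" using id by (simp add: mult_ac)
  also have "\<dots> = of_nat (if d * m dvd j * m then aa k ((j * m) div (d * m)) else 0)"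
    by (rule Z_aa) (use d m j m0 in auto)
  also have "\<dots> = of_nat (if d dvd j then aa k (j div d) else 0)"
    using m0 by simp
  also have "\<dots> = Zm i j" using Z_aa[OF d j] id by simp
  finally show ?thesis .
qed

lemma partd:
  assumes i: "i \<ge> 1" and j: "j \<ge> 1"
  shows "(i > j \<longrightarrow> Zm i j = 0) \<and> (i = j \<longrightarrow> Zm i j = 1)"
proof -
  define k where "k = multiplicity 2 i"
  define d where "d = i div 2^k"
  have id: "i = d * 2^k" and d: "odd d" using decomp[OF i] k_def d_def by auto
  have d0: "d > 0" using odd_pos[OF d] .
  have Z: "Zm i j = of_nat (if d dvd j then aa k (j div d) else 0)" using Z_aa[OF d j] id by simp
  have A: "Zm i j = 0" if "i > j"
  proof (cases "d dvd j")
    case True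
    then obtain q where q: "j = d * q" by (auto elim: dvdE)
    then have "q \<ge> 1" using j by (cases q) auto
    moreover have "q < 2^k" using that q id d0 by simp
    ultimately have "aa k q = 0" by (rule aa_small)
    then show ?thesis using Z q d0 by simp
  qed (simp add: Z)
  have B: "Zm i j = 1" if "i = j"
  proof -
    have "d dvd j" "j div d = 2^k" using that id d0 by auto
    then show ?thesis using Z aa_diag by simp
  qed
  show ?thesis using A B by blast
qed

lemma Z_unitri: "unitri Zm"
  unfolding unitri_def
proof (intro conjI allI impI)
  fix i j :: nat assume "1 \<le> j" "j < i"
  then show "Zm i j = 0" using partd[of i j] by auto
next
  fix i :: nat assume "i \<ge> 1" then show "Zm i i = 1" using partd[of i i] by auto
qed

lemma ZD_JZ:
  assumes i: "i \<ge> 1" and j: "j \<ge> 1"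
  shows "mmult Zm Dm i j = mmult Jm Zm i j"
proof -
  have cZ: "col_finite Zm" by (rule unitri_col_finite[OF Z_unitri])
  have "mmult Zm Dm i j = (\<Sum>k\<in>{1..j}. Zm i k * Dm k j)"
    by (rule mmult_tri) (auto simp: Dm_def dest: dvd_imp_le)
  also have "\<dots> = (\<Sum>k\<in>{1..j}. Zm i k * Mm k j) + (\<Sum>k\<in>{1..j}. Zm i k * idm k j)"
    unfolding sum.distrib[symmetric] by (rule sum.cong) (simp_all add: Mm_def algebra_simps)
  also have "(\<Sum>k\<in>{1..j}. Zm i k * Mm k j) = mmult Zm Mm i j"
    by (rule mmult_tri[symmetric]) (auto simp: Mm_val dest: dvd_imp_le)
  also have "(\<Sum>k\<in>{1..j}. Zm i k * idm k j) = mmult Zm idm i j"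
    by (rule mmult_tri[symmetric]) (auto simp: idm_def)
  also have "\<dots> = Zm i j" using j by (rule mmult_idm_right)
  also have "mmult Zm Mm i j = Zm (2 * i) j" using Z_double[OF i] by simp
  also have "Zm (2 * i) j + Zm i j = mmult Jm Zm i j" using mmult_Jm_left[OF cZ i j] by simp
  finally show ?thesis .
qed

lemma parte: "conj_to_J Zm"
proof -
  obtain W where W: "col_finite W" "meq (mmult Zm W) idm" "meq (mmult W Zm) idm"
    using unitri_inverse[OF Z_unitri] by blast
  have cZ: "col_finite Zm" by (rule unitri_col_finite[OF Z_unitri])
  have "meq ((Zm **\<^sub>M Dm) **\<^sub>M W) Jm"
    unfolding meq_def
  proof (intro allI impI)
    fix i j :: nat assume i: "i \<ge> 1" and j: "j \<ge> 1"
    have "meq (mmult Zm Dm) (mmult Jm Zm)" using ZD_JZ by (simp add: meq_def)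
    then have "((Zm **\<^sub>M Dm) **\<^sub>M W) i j = ((Jm **\<^sub>M Zm) **\<^sub>M W) i j"
      using meq_cong_left i by blast
    also have "\<dots> = (Jm **\<^sub>M (Zm **\<^sub>M W)) i j" by (rule mmult_assoc[OF cZ W(1) j])
    also have "\<dots> = (Jm **\<^sub>M idm) i j" by (rule meq_cong_right[OF W(2) j])
    also have "\<dots> = Jm i j" by (rule mmult_idm_right[OF j])
    finally show "((Zm **\<^sub>M Dm) **\<^sub>M W) i j = Jm i j" .
  qed
  then show ?thesis using W unfolding conj_to_J_def by blast
qed

lemma partf: "Zm \<in> DR0"
  unfolding DR0_def
proof (intro CollectI conjI)
  show "col_finite Zm" by (rule unitri_col_finite[OF Z_unitri])
  show "\<exists>C c :: real. C > 0 \<and> c > 0 \<and>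
        (\<forall>i\<ge>1. \<forall>j\<ge>1. (real i > C * real j powr c \<longrightarrow> Zm i j = 0)
                        \<and> norm (Zm i j) \<le> C * real j powr c)"
  proof (rule exI[of _ 1], rule exI[of _ 2], intro conjI)
  show "(0::real) < 1" "(0::real) < 2" by auto
  show "\<forall>i\<ge>1. \<forall>j\<ge>1. (real i > 1 * real j powr 2 \<longrightarrow> Zm i j = 0) \<and> norm (Zm i j) \<le> 1 * real j powr 2"
  proof (intro allI impI conjI)
    fix i j :: nat assume i: "i \<ge> 1" and j: "j \<ge> 1"
    have pw: "real j powr 2 = real (j^2)" using j by (simp add: powr_realpow)
    have jj: "j \<le> j^2" by (simp add: power2_eq_square)
    show "Zm i j = 0" if "real i > 1 * real j powr 2"
    proof -
      have "i > j^2" using that pw by simp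
      then have "i > j" using jj by simp
      then show ?thesis using partd[OF i j] by simp
    qed
    define k where "k = multiplicity 2 i"
    define d where "d = i div 2^k"
    have id: "i = d * 2^k" and d: "odd d" using decomp[OF i] k_def d_def by auto
    have d0: "d > 0" using odd_pos[OF d] .
    have Z: "Zm i j = of_nat (if d dvd j then aa k (j div d) else 0)" using Z_aa[OF d j] id by simp
    have "(if d dvd j then aa k (j div d) else 0) \<le> j^2"
    proof (cases "d dvd j")
      case True
      then obtain q where q: "j = d * q" by (auto elim: dvdE)
      then have q1: "q \<ge> 1" using j by (cases q) auto
      have "aa k q \<le> q^2" by (rule aa_bound[OF q1])
      also have "q^2 \<le> j^2" using q d0 by (simp add: power_mono)
      finally show ?thesis using True q d0 by simp
    qed simp
    then show "norm (Zm i j) \<le> 1 * real j powr 2"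
      unfolding Z pw norm_of_nat by simp
  qed
  qed
qed

lemma partg:
  assumes cA: "col_finite A"
    and odd_rows: "\<forall>i\<ge>1. \<forall>j\<ge>1. odd i \<longrightarrow> A i j = (if i = j then 1 else 0)"
    and cj: "conj_to_J A"
  shows "meq A Zm"
proof -
  obtain W where W: "col_finite W" "meq (A **\<^sub>M W) idm" "meq (W **\<^sub>M A) idm"
    "meq ((A **\<^sub>M Dm) **\<^sub>M W) Jm" using cj unfolding conj_to_J_def by blast
  have AD: "mmult A Dm i j = mmult Jm A i j" if i: "i \<ge> 1" and j: "j \<ge> 1" for i j
  proof -
    have "mmult A Dm i j = mmult (mmult A Dm) idm i j" using mmult_idm_right[OF j] by simp
    also have "\<dots> = mmult (mmult A Dm) (mmult W A) i j" using meq_cong_right[OF W(3) j] by simp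
    also have "\<dots> = mmult (mmult (mmult A Dm) W) A i j" using mmult_assoc[OF W(1) cA j] by simp
    also have "\<dots> = mmult Jm A i j" using meq_cong_left[OF W(4) i] by simp
    finally show ?thesis .
  qed
  have dbl: "A (2 * i) j = mmult A Mm i j" if i: "i \<ge> 1" and j: "j \<ge> 1" for i j
  proof -
    have "mmult A Dm i j = (\<Sum>k\<in>{1..j}. A i k * Dm k j)"
      by (rule mmult_tri) (auto simp: Dm_def dest: dvd_imp_le)
  also have "\<dots> = (\<Sum>k\<in>{1..j}. A i k * Mm k j) + (\<Sum>k\<in>{1..j}. A i k * idm k j)"
    unfolding sum.distrib[symmetric] by (rule sum.cong) (simp_all add: Mm_def algebra_simps)
    also have "(\<Sum>k\<in>{1..j}. A i k * Mm k j) = mmult A Mm i j"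
      by (rule mmult_tri[symmetric]) (auto simp: Mm_val dest: dvd_imp_le)
    also have "(\<Sum>k\<in>{1..j}. A i k * idm k j) = mmult A idm i j"
      by (rule mmult_tri[symmetric]) (auto simp: idm_def)
    also have "\<dots> = A i j" using j by (rule mmult_idm_right)
    finally have "mmult A Dm i j = mmult A Mm i j + A i j" .
    moreover have "mmult A Dm i j = A i j + A (2 * i) j" using AD[OF i j] mmult_Jm_left[OF cA i j] by simp
    ultimately show ?thesis by simp
  qed
  have rows: "A (d * 2^k) j = mpow Mm k d j" if d: "odd d" and j: "j \<ge> 1" for d k j
    using j
  proof (induction k arbitrary: j)
    case 0
    have "d \<ge> 1" using odd_pos[OF d] by simp
    then show ?case using odd_rows 0 d by (simp add: idm_def)
  next
    case (Suc k)
    have dk: "d * 2^k \<ge> 1" using odd_pos[OF d] by simp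
    have "A (d * 2 ^ Suc k) j = A (2 * (d * 2^k)) j" by (simp add: mult_ac)
    also have "\<dots> = mmult A Mm (d * 2^k) j" by (rule dbl[OF dk Suc.prems])
    also have "\<dots> = mmult (mpow Mm k) Mm d j"
      unfolding mmult_def by (rule sum.cong[OF refl]) (simp add: Suc.IH)
    finally show ?case by simp
  qed
  show ?thesis
    unfolding meq_def
  proof (intro allI impI)
    fix i j :: nat assume i: "i \<ge> 1" and j: "j \<ge> 1"
    define k where "k = multiplicity 2 i"
    define d where "d = i div 2^k"
    have id: "i = d * 2^k" and d: "odd d" using decomp[OF i] k_def d_def by auto
    show "A i j = Zm i j" using rows[OF d j] Zrow'[OF d] id by simp
  qed
qed

theorem lemma4p4:
  shows "(\<forall>i\<ge>1. \<forall>j\<ge>1. odd i \<longrightarrow> Zm i j = (if i = j then 1 else 0))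
    \<and> (\<forall>d k j. odd d \<longrightarrow> k \<ge> 1 \<longrightarrow> j \<ge> 1 \<longrightarrow>
          Zm (d * 2 ^ k) j = (if d dvd j then of_nat (alpha k (j div d)) else 0))
    \<and> (\<forall>i\<ge>1. \<forall>j\<ge>1. \<forall>m. odd m \<longrightarrow> Zm (i * m) (j * m) = Zm i j)
    \<and> (\<forall>i\<ge>1. \<forall>j\<ge>1. (i > j \<longrightarrow> Zm i j = 0) \<and> (i = j \<longrightarrow> Zm i j = 1))
    \<and> conj_to_J Zm
    \<and> Zm \<in> DR0
    \<and> (\<forall>A. col_finite A
          \<longrightarrow> (\<forall>i\<ge>1. \<forall>j\<ge>1. odd i \<longrightarrow> A i j = (if i = j then 1 else 0))
          \<longrightarrow> conj_to_J A
          \<longrightarrow> meq A Zm)"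
  using partb partc partd parte partf partg by (auto simp: Zm_def)

end
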